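(* Let $X\subseteq Y$ with $|X|\le|Y\setminus X|$. Then the map $\pi:S_\infty(Y)\to(I(X),\tau_{pp})$, $\pi(f)=\widehat f$, is continuous, onto and open, where $S_\infty(Y)$ carries the topology of pointwise convergence (the product topology inherited from $Y^Y$, $Y$ discrete).
   Context: $S_\infty(Y)$ is the group of all bijections $Y\to Y$. $I(X)$ is the set of all bijections $f:A\to B$ with $A,B\subseteq X$ (including the empty map), $\mathrm{dom}(f)=A$, $\mathrm{im}(f)=B$. For $f\in S_\infty(Y)$, $\widehat f=\{(x,f(x)): x\in X,\ f(x)\in X\}$, the restriction of $f$ to $X\cap f^{-1}(X)$. For $x,y\in X$: $v(x,y)=\{f\in I(X): x\in\mathrm{dom}(f), f(x)=y\}$, $w_1(x)=\{f: x\notin\mathrm{dom}(f)\}$, $w_2(y)=\{f: y\notin\mathrm{im}(f)\}$; $\tau_{pp}$ is the topology on $I(X)$ generated by the subbasis of all these sets. *)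

theory Defs
  imports "HOL-Analysis.Analysis" "HOL-Library.Equipollence"
begin

text \<open>S_infinity(Y): all bijections of Y, represented as extensional functions
  (value undefined outside Y), i.e. the points of the product space Y^Y.\<close>
definition Sinf :: "'a set \<Rightarrow> ('a \<Rightarrow> 'a) set" where
  "Sinf Y = {f. f \<in> extensional Y \<and> bij_betw f Y Y}"

definition Sinf_top :: "'a set \<Rightarrow> ('a \<Rightarrow> 'a) topology" where
  "Sinf_top Y = subtopology (product_topology (\<lambda>_. discrete_topology Y) Y) (Sinf Y)"

definition pinj :: "'a set \<Rightarrow> ('a \<rightharpoonup> 'a) set" where
  "pinj X = {f. dom f \<subseteq> X \<and> ran f \<subseteq> X \<and> inj_on f (dom f)}"

definition vset :: "'a set \<Rightarrow> 'a \<Rightarrow> 'a \<Rightarrow> ('a \<rightharpoonup> 'a) set" where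
  "vset X x y = {f \<in> pinj X. x \<in> dom f \<and> f x = Some y}"

definition w1set :: "'a set \<Rightarrow> 'a \<Rightarrow> ('a \<rightharpoonup> 'a) set" where
  "w1set X x = {f \<in> pinj X. x \<notin> dom f}"

definition w2set :: "'a set \<Rightarrow> 'a \<Rightarrow> ('a \<rightharpoonup> 'a) set" where
  "w2set X y = {f \<in> pinj X. y \<notin> ran f}"

text \<open>tau_pp: topology on I(X) generated by the subbasis of all v(x,y), w1(x), w2(y)
  (x, y in X); the whole space I(X) is added so that it is open even when X is empty.\<close>
definition tau_pp :: "'a set \<Rightarrow> ('a \<rightharpoonup> 'a) topology" where
  "tau_pp X = topology_generated_by
     (insert (pinj X)
       ({vset X x y | x y. x \<in> X \<and> y \<in> X} \<union> {w1set X x | x. x \<in> X} \<union> {w2set X y | y. y \<in> X}))"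

definition hat :: "'a set \<Rightarrow> ('a \<Rightarrow> 'a) \<Rightarrow> ('a \<rightharpoonup> 'a)" where
  "hat X f = (\<lambda>x. if x \<in> X \<and> f x \<in> X then Some (f x) else None)"

end

theory Submission
  imports Defs
begin


definition KK :: "('a\<Rightarrow>'a) \<Rightarrow> ('a\<Rightarrow>'a) \<Rightarrow> 'a set \<Rightarrow> 'a set \<Rightarrow> ('a\<Rightarrow>'a) \<Rightarrow> 'a set \<Rightarrow> 'a set \<Rightarrow> 'a \<Rightarrow> 'a" where
"KK P Q D R h M Y x = (if x \<in> D then P x else if x \<in> M then h x
   else if x \<in> h`(M-R) then inv_into M h x
   else if x \<in> h`R then h (Q (inv_into M h x))
   else if x \<in> Y then x else undefined)"

lemma KK_inv:
  assumes "P`D \<subseteq> R" "Q`R \<subseteq> D" "\<forall>x\<in>D. Q(P x)=x" "\<forall>y\<in>R. P(Q y)=y"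
    "D\<subseteq>M" "R\<subseteq>M" "M\<subseteq>Y" "inj_on h M" "h`M \<subseteq> Y - M" "x\<in>Y"
  shows "KK P Q D R h M Y x \<in> Y \<and> KK Q P R D h M Y (KK P Q D R h M Y x) = x"
proof -
  consider (a) "x \<in> D" | (b) "x \<notin> D" "x \<in> M" | (c) "x \<notin> M" "x \<in> h`(M-R)"
     | (d) "x \<notin> M" "x \<notin> h`(M-R)" "x \<in> h`R" | (e) "x \<notin> M" "x \<notin> h`(M-R)" "x \<notin> h`R"
    by blast
  then show ?thesis
  proof cases
    case a
    have "P x \<in> R" using assms(1) a by blast
    hence "P x \<in> Y" using assms(6,7) by blast
    have k1: "KK P Q D R h M Y x = P x" using a by (simp add: KK_def)
    have "Q (P x) = x" using assms(3) a by blast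
    hence k2: "KK Q P R D h M Y (P x) = x" using \<open>P x \<in> R\<close> by (simp add: KK_def)
    show ?thesis using k1 k2 \<open>P x \<in> Y\<close> by simp
  next
    case b
    have hx: "h x \<notin> M" "h x \<in> Y" using assms(9) b by blast+
    hence hx2: "h x \<notin> R" "h x \<notin> D" using assms(5,6) by blast+
    have hx3: "h x \<in> h`(M-D)" using b by blast
    have iv: "inv_into M h (h x) = x" using b assms(8) by (simp add: inv_into_f_f)
    have k1: "KK P Q D R h M Y x = h x" using b by (simp add: KK_def)
    have k2: "KK Q P R D h M Y (h x) = x" using hx hx2 hx3 iv by (simp add: KK_def)
    show ?thesis using k1 k2 hx by simp
  next
    case c
    then obtain m where m: "m \<in> M" "m \<notin> R" "x = h m" by blast
    have xM: "x \<notin> M" using assms(9) m by blast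
    hence xD: "x \<notin> D" using assms(5) by blast
    have iv: "inv_into M h x = m" using m assms(8) by (simp add: inv_into_f_f)
    have c2: "x \<in> h`(M-R)" using m by blast
    have k1: "KK P Q D R h M Y x = m" using xM xD c2 iv by (simp add: KK_def)
    have k2: "KK Q P R D h M Y m = x" using m by (simp add: KK_def)
    have "m \<in> Y" using m assms(7) by blast
    then show ?thesis using k1 k2 by simp
  next
    case d
    then obtain r where m: "r \<in> R" "x = h r" by blast
    have xM: "x \<notin> M" using assms(6,9) m by blast
    hence xD: "x \<notin> D" using assms(5) by blast
    have "r \<in> M" using m assms(6) by blast
    have iv: "inv_into M h x = r" using m \<open>r \<in> M\<close> assms(8) by (simp add: inv_into_f_f)
    have c2: "x \<notin> h`(M-R)"
    proof
      assume "x \<in> h`(M-R)"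
      then obtain m' where "m' \<in> M-R" "x = h m'" by blast
      hence "m' = r" using m \<open>r \<in> M\<close> assms(8) by (metis DiffD1 inj_onD)
      thus False using \<open>m' \<in> M-R\<close> m by blast
    qed
    have c3: "x \<in> h`R" using m by blast
    have k1: "KK P Q D R h M Y x = h (Q r)" using xM xD c2 c3 iv by (simp add: KK_def)
    have qr: "Q r \<in> D" using assms(2) m by blast
    hence qrM: "Q r \<in> M" using assms(5) by blast
    have y1: "h (Q r) \<notin> M" "h (Q r) \<in> Y" using assms(9) qrM by blast+
    hence y2: "h (Q r) \<notin> R" using assms(6) by blast
    have y3: "h (Q r) \<notin> h`(M-D)"
    proof
      assume "h (Q r) \<in> h`(M-D)"
      then obtain m' where "m' \<in> M-D" "h (Q r) = h m'" by blast
      hence "m' = Q r" using qrM assms(8) by (metis DiffD1 inj_onD)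
      thus False using \<open>m' \<in> M-D\<close> qr by blast
    qed
    have y4: "h (Q r) \<in> h ` D" using qr by blast
    have iv2: "inv_into M h (h (Q r)) = Q r" using qrM assms(8) by (simp add: inv_into_f_f)
    have pq: "P (Q r) = r" using assms(4) m by blast
    have k2: "KK Q P R D h M Y (h (Q r)) = h r" using y1 y2 y3 y4 iv2 pq by (simp add: KK_def)
    show ?thesis using k1 k2 y1 m by simp
  next
    case e
    have "h`M = h`(M-R) \<union> h`R" using assms(6) by blast
    hence "x \<notin> h`M" using e by simp
    moreover have "h`(M-D) \<subseteq> h`M" "h`D \<subseteq> h`M" using assms(5) by blast+
    ultimately have "x \<notin> h`(M-D)" "x \<notin> h`D" by blast+
    moreover have "x \<notin> D" "x \<notin> R" using e assms(5,6) by blast+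
    ultimately show ?thesis using e assms(10) by (simp add: KK_def)
  qed
qed

lemma extend:
  assumes "inj_on P D" "P ` D = R" "D \<subseteq> M" "R \<subseteq> M" "M \<subseteq> Y" "inj_on h M" "h ` M \<subseteq> Y - M"
  shows "\<exists>k\<in>Sinf Y. (\<forall>x\<in>D. k x = P x) \<and> (\<forall>x\<in>M-D. k x \<in> Y - M)"
proof -
  define Q where "Q = inv_into D P"
  have a1: "P`D \<subseteq> R" "Q`R \<subseteq> D" "\<forall>x\<in>D. Q(P x)=x" "\<forall>y\<in>R. P(Q y)=y"
    using assms(1,2) by (auto simp: Q_def inv_into_into f_inv_into_f)
  define k where "k = KK P Q D R h M Y"
  define k' where "k' = KK Q P R D h M Y"
  have 1: "\<And>x. x\<in>Y \<Longrightarrow> k x \<in> Y \<and> k' (k x) = x"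
    unfolding k_def k'_def by (rule KK_inv[OF a1 assms(3-7)])
  have 2: "\<And>x. x\<in>Y \<Longrightarrow> k' x \<in> Y \<and> k (k' x) = x"
    unfolding k_def k'_def by (rule KK_inv[OF a1(2) a1(1) a1(4) a1(3) assms(4) assms(3) assms(5-7)])
  have "bij_betw k Y Y"
    by (rule bij_betw_byWitness[where f'=k']) (use 1 2 in blast)+
  moreover have "k \<in> extensional Y"
  proof -
    have "x \<notin> Y \<Longrightarrow> x \<notin> D \<and> x \<notin> M \<and> x \<notin> h`(M-R) \<and> x \<notin> h`R" for x using assms(3,4,5,7) by blast
    hence "x \<notin> Y \<Longrightarrow> k x = undefined" for x unfolding k_def KK_def by simp
    thus ?thesis unfolding extensional_def by blast
  qed
  moreover have "\<forall>x\<in>D. k x = P x" by (auto simp: k_def KK_def)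
  moreover have "\<forall>x\<in>M-D. k x \<in> Y - M"
  proof
    fix x assume "x \<in> M-D"
    hence "k x = h x" by (simp add: k_def KK_def)
    thus "k x \<in> Y - M" using \<open>x \<in> M-D\<close> assms(7) by blast
  qed
  ultimately show ?thesis unfolding Sinf_def by blast
qed



lemma Un_fin_eqpoll: assumes "infinite A" "finite G" shows "A \<union> G \<approx> A"
  using assms(2) proof (induction G rule: finite_induct)
  case empty then show ?case by simp
next
  case (insert a G)
  have "A \<union> insert a G = insert a (A \<union> G)" by blast
  also have "\<dots> \<approx> A \<union> G" by (rule infinite_insert_eqpoll) (use assms(1) in simp)
  also have "\<dots> \<approx> A" by (rule insert.IH)
  finally show ?case .
qed

lemma Diff_fin_eqpoll: assumes "infinite A" "finite G" shows "A - G \<approx> A"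
  using assms(2) proof (induction G rule: finite_induct)
  case empty then show ?case by simp
next
  case (insert a G)
  show ?case
  proof (cases "a \<in> A - G")
    case False
    then have "A - insert a G = A - G" by blast
    then show ?thesis using insert.IH by simp
  next
    case True
    have inf: "infinite (A - insert a G)"
      by (rule Diff_infinite_finite) (use insert.hyps(1) assms(1) in simp_all)
    have "A - insert a G \<approx> insert a (A - insert a G)"
      using inf by (rule eqpoll_sym[OF infinite_insert_eqpoll])
    also have "insert a (A - insert a G) = A - G" using True by blast
    also have "\<dots> \<approx> A" by (rule insert.IH)
    finally show ?thesis .
  qed
qed

lemma lepoll_finite': "A \<lesssim> B \<Longrightarrow> finite B \<Longrightarrow> finite A"
  unfolding lepoll_iff by (metis finite_subset finite_imageI)

lemma Sinf_D: "f \<in> Sinf Y \<Longrightarrow> bij_betw f Y Y \<and> f \<in> extensional Y"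
  by (simp add: Sinf_def)

lemma topsp_Sinf: "topspace (Sinf_top Y) = Sinf Y"
proof -
  have "Sinf Y \<subseteq> (\<Pi>\<^sub>E i\<in>Y. Y)"
  proof
    fix f assume "f \<in> Sinf Y"
    hence "bij_betw f Y Y" "f \<in> extensional Y" by (auto simp: Sinf_def)
    thus "f \<in> (\<Pi>\<^sub>E i\<in>Y. Y)" unfolding PiE_iff using bij_betwE by blast
  qed
  thus ?thesis unfolding Sinf_top_def topspace_subtopology topspace_product_topology
    by (simp only: topspace_discrete_topology) blast
qed

lemma basic_open:
  assumes "x \<in> Y" "B \<subseteq> Y"
  shows "openin (Sinf_top Y) {f \<in> Sinf Y. f x \<in> B}"
proof -
  have "openin (product_topology (\<lambda>_. discrete_topology Y) Y)
      {f \<in> topspace (product_topology (\<lambda>_. discrete_topology Y) Y). f x \<in> B}"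
    by (rule openin_continuous_map_preimage[OF continuous_map_product_projection[OF assms(1)]])
       (simp only: openin_discrete_topology assms(2))
  moreover have "{f \<in> Sinf Y. f x \<in> B} =
     {f \<in> topspace (product_topology (\<lambda>_. discrete_topology Y) Y). f x \<in> B} \<inter> Sinf Y"
  proof -
    have "Sinf Y \<subseteq> topspace (product_topology (\<lambda>_. discrete_topology Y) Y)"
      using topsp_Sinf[of Y] unfolding Sinf_top_def topspace_subtopology by blast
    thus ?thesis by blast
  qed
  ultimately show ?thesis unfolding Sinf_top_def openin_subtopology by blast
qed

lemma hat_pinj: assumes "f \<in> Sinf Y" "X \<subseteq> Y" shows "hat X f \<in> pinj X"
proof -
  have "inj_on f Y" using assms by (simp add: Sinf_def bij_betw_def)
  hence "inj_on f X" using assms(2) inj_on_subset by blast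
  have d: "dom (hat X f) = {x\<in>X. f x\<in>X}" by (auto simp: hat_def dom_def)
  have r: "ran (hat X f) \<subseteq> X" by (auto simp: hat_def ran_def split: if_splits)
  have "inj_on (hat X f) (dom (hat X f))"
  proof (rule inj_onI)
    fix x y assume "x \<in> dom (hat X f)" "y \<in> dom (hat X f)" "hat X f x = hat X f y"
    hence "x \<in> X" "y \<in> X" "f x = f y" using d by (auto simp: hat_def)
    thus "x = y" using \<open>inj_on f X\<close> by (meson inj_onD)
  qed
  thus ?thesis unfolding pinj_def using d r by auto
qed



lemma Sinf_inY: "f \<in> Sinf Y \<Longrightarrow> x \<in> Y \<Longrightarrow> f x \<in> Y"
  unfolding Sinf_def using bij_betwE by blast

lemma Sinf_inj: assumes "f \<in> Sinf Y" "x \<in> Y" "z \<in> Y" "f x = f z" shows "x = z"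
proof -
  have "inj_on f Y" using assms(1) by (simp add: Sinf_def bij_betw_def)
  thus ?thesis using assms(2-4) by (simp add: inj_on_def)
qed

lemma Sinf_surj: assumes "f \<in> Sinf Y" "y \<in> Y" shows "\<exists>z\<in>Y. f z = y"
proof -
  have "f ` Y = Y" using assms(1) by (simp add: Sinf_def bij_betw_def)
  hence "y \<in> f ` Y" using assms(2) by simp
  thus ?thesis by (simp add: image_iff eq_commute)
qed

lemma hat_app: "hat X f x = (if x \<in> X \<and> f x \<in> X then Some (f x) else None)"
  by (simp add: hat_def)

lemma dom_hat: "x \<in> dom (hat X f) \<longleftrightarrow> x \<in> X \<and> f x \<in> X"
  by (simp add: hat_def dom_def)

lemma ran_hat: "y \<in> ran (hat X f) \<longleftrightarrow> (\<exists>x\<in>X. f x \<in> X \<and> f x = y)"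
  by (auto simp: ran_def hat_def split: if_splits)

lemma hat_vset:
  assumes "f \<in> Sinf Y" "X \<subseteq> Y" "x \<in> X" "y \<in> X"
  shows "hat X f \<in> vset X x y \<longleftrightarrow> f x = y"
  using hat_pinj[OF assms(1,2)] assms(3,4) unfolding vset_def by (simp add: hat_app dom_hat) blast

lemma hat_w1set:
  assumes "f \<in> Sinf Y" "X \<subseteq> Y" "x \<in> X"
  shows "hat X f \<in> w1set X x \<longleftrightarrow> f x \<in> Y - X"
proof -
  have "x \<in> Y" using assms(2,3) by blast
  hence fx: "f x \<in> Y" by (rule Sinf_inY[OF assms(1)])
  have hp: "hat X f \<in> pinj X" by (rule hat_pinj[OF assms(1,2)])
  have "hat X f \<in> w1set X x \<longleftrightarrow> x \<notin> dom (hat X f)" using hp by (simp add: w1set_def)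
  also have "\<dots> \<longleftrightarrow> f x \<notin> X" using assms(3) by (simp add: dom_hat)
  also have "\<dots> \<longleftrightarrow> f x \<in> Y - X" using fx by blast
  finally show ?thesis .
qed

lemma hat_w2set:
  assumes "f \<in> Sinf Y" "X \<subseteq> Y" "y \<in> X"
  shows "hat X f \<in> w2set X y \<longleftrightarrow> (\<exists>z\<in>Y-X. f z = y)"
proof -
  have "y \<notin> ran (hat X f) \<longleftrightarrow> (\<exists>z\<in>Y-X. f z = y)"
  proof
    assume a: "y \<notin> ran (hat X f)"
    have "y \<in> Y" using assms(2,3) by blast
    then obtain z where z: "z \<in> Y" "f z = y" using Sinf_surj[OF assms(1)] by blast
    have "z \<notin> X"
    proof
      assume "z \<in> X"
      hence "\<exists>x\<in>X. f x \<in> X \<and> f x = y" using z assms(3) by metis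
      hence "y \<in> ran (hat X f)" by (simp only: ran_hat)
      thus False using a by contradiction
    qed
    thus "\<exists>z\<in>Y-X. f z = y" using z by blast
  next
    assume "\<exists>z\<in>Y-X. f z = y"
    then obtain z where z: "z \<in> Y" "z \<notin> X" "f z = y" by blast
    show "y \<notin> ran (hat X f)"
    proof
      assume "y \<in> ran (hat X f)"
      hence "\<exists>x\<in>X. f x \<in> X \<and> f x = y" by (simp only: ran_hat)
      then obtain x where x: "x \<in> X" "f x = y" by blast
      have "x \<in> Y" using x(1) assms(2) by blast
      have "x = z" using Sinf_inj[OF assms(1) \<open>x \<in> Y\<close> z(1)] x z by simp
      thus False using x z by blast
    qed
  qed
  moreover have "hat X f \<in> pinj X" by (rule hat_pinj[OF assms(1,2)])
  ultimately show ?thesis unfolding w2set_def by simp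
qed

definition SB :: "'a set \<Rightarrow> ('a \<rightharpoonup> 'a) set set" where
  "SB X = insert (pinj X)
       ({vset X x y | x y. x \<in> X \<and> y \<in> X} \<union> {w1set X x | x. x \<in> X} \<union> {w2set X y | y. y \<in> X})"

lemma tau_SB: "tau_pp X = topology_generated_by (SB X)"
  by (simp add: tau_pp_def SB_def)

lemma SB_sub: "U \<in> SB X \<Longrightarrow> U \<subseteq> pinj X"
  unfolding SB_def vset_def w1set_def w2set_def by blast

lemma continuity:
  assumes "X \<subseteq> Y"
  shows "continuous_map (Sinf_top Y) (tau_pp X) (hat X)"
  unfolding tau_SB
proof (rule continuous_on_generated_topo)
  show "hat X ` topspace (Sinf_top Y) \<subseteq> \<Union> (SB X)"
  proof
    fix q assume "q \<in> hat X ` topspace (Sinf_top Y)"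
    then obtain f where "f \<in> Sinf Y" "q = hat X f" unfolding topsp_Sinf by blast
    hence "q \<in> pinj X" using hat_pinj[OF _ assms] by blast
    moreover have "pinj X \<in> SB X" by (simp add: SB_def)
    ultimately show "q \<in> \<Union> (SB X)" by (rule UnionI[rotated])
  qed
next
  fix U assume U: "U \<in> SB X"
  have ts: "topspace (Sinf_top Y) = Sinf Y" by (rule topsp_Sinf)
  consider (p) "U = pinj X" | (v) x y where "x \<in> X" "y \<in> X" "U = vset X x y"
    | (w1) x where "x \<in> X" "U = w1set X x" | (w2) y where "y \<in> X" "U = w2set X y"
    using U unfolding SB_def by auto
  then show "openin (Sinf_top Y) (hat X -` U \<inter> topspace (Sinf_top Y))"
  proof cases
    case p
    have "hat X -` U \<inter> topspace (Sinf_top Y) = topspace (Sinf_top Y)"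
      using hat_pinj[OF _ assms] unfolding ts p by blast
    then show ?thesis by simp
  next
    case (v x y)
    have "hat X -` U \<inter> topspace (Sinf_top Y) = {f \<in> Sinf Y. f x \<in> {y}}"
      using hat_vset[OF _ assms v(1,2)] unfolding ts v(3) by blast
    moreover have "openin (Sinf_top Y) {f \<in> Sinf Y. f x \<in> {y}}"
      by (rule basic_open) (use v assms in blast)+
    ultimately show ?thesis by simp
  next
    case (w1 x)
    have "hat X -` U \<inter> topspace (Sinf_top Y) = {f \<in> Sinf Y. f x \<in> Y - X}"
      using hat_w1set[OF _ assms w1(1)] unfolding ts w1(2) by blast
    moreover have "openin (Sinf_top Y) {f \<in> Sinf Y. f x \<in> Y - X}"
      by (rule basic_open) (use w1 assms in blast)+
    ultimately show ?thesis by simp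
  next
    case (w2 y)
    have "hat X -` U \<inter> topspace (Sinf_top Y) = (\<Union>z\<in>Y-X. {f \<in> Sinf Y. f z \<in> {y}})"
      using hat_w2set[OF _ assms w2(1)] unfolding ts w2(2) by blast
    moreover have "openin (Sinf_top Y) (\<Union>z\<in>Y-X. {f \<in> Sinf Y. f z \<in> {y}})"
    proof (rule openin_Union, clarify)
      fix z assume "z \<in> Y" "z \<notin> X"
      show "openin (Sinf_top Y) {f \<in> Sinf Y. f z \<in> {y}}"
        by (rule basic_open) (use \<open>z \<in> Y\<close> w2 assms in blast)+
    qed
    ultimately show ?thesis by simp
  qed
qed



lemma pinj_some: "q \<in> pinj X \<Longrightarrow> x \<in> dom q \<Longrightarrow> q x = Some (the (q x))"
  by auto

lemma pinj_dom: "q \<in> pinj X \<Longrightarrow> dom q \<subseteq> X"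
  by (simp add: pinj_def)

lemma pinj_ran: "q \<in> pinj X \<Longrightarrow> ran q \<subseteq> X"
  by (simp add: pinj_def)

lemma pinj_inj: "q \<in> pinj X \<Longrightarrow> inj_on q (dom q)"
  by (simp add: pinj_def)

lemma the_in_ran: "x \<in> dom q \<Longrightarrow> the (q x) \<in> ran q"
  by (auto simp: ran_def dom_def)

lemma surjectivity:
  assumes "X \<subseteq> Y" "X \<lesssim> Y - X"
  shows "hat X ` Sinf Y = pinj X"
proof
  show "hat X ` Sinf Y \<subseteq> pinj X" using hat_pinj[OF _ assms(1)] by blast
next
  show "pinj X \<subseteq> hat X ` Sinf Y"
  proof
    fix q assume q: "q \<in> pinj X"
    obtain h where h: "inj_on h X" "h \<in> X \<rightarrow> Y - X" using assms(2) unfolding lepoll_def' by blast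
    define P where "P = (\<lambda>x. the (q x))"
    have injP: "inj_on P (dom q)"
    proof (rule inj_onI)
      fix x z assume xz: "x \<in> dom q" "z \<in> dom q" "P x = P z"
      have e1: "q x = Some (P x)" using pinj_some[OF q xz(1)] unfolding P_def .
      have e2: "q z = Some (P z)" using pinj_some[OF q xz(2)] unfolding P_def .
      have "q x = q z" using e1 e2 xz(3) by simp
      thus "x = z" using pinj_inj[OF q] xz(1,2) by (simp add: inj_on_def)
    qed
    have PD: "P ` dom q = ran q"
    proof (rule set_eqI)
      fix y
      show "y \<in> P ` dom q \<longleftrightarrow> y \<in> ran q"
      proof
        assume "y \<in> P ` dom q"
        then obtain x where x: "x \<in> dom q" "y = P x" by (rule imageE)
        show "y \<in> ran q" unfolding x(2) P_def by (rule the_in_ran[OF x(1)])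
      next
        assume "y \<in> ran q"
        then obtain x where x: "q x = Some y" unfolding ran_def by blast
        hence "x \<in> dom q" by (simp add: domI)
        moreover have "P x = y" unfolding P_def using x by simp
        ultimately show "y \<in> P ` dom q" by (metis imageI)
      qed
    qed
    have hX: "h ` X \<subseteq> Y - X" using h(2) by blast
    obtain k where k: "k \<in> Sinf Y" "\<forall>x\<in>dom q. k x = P x" "\<forall>x\<in>X - dom q. k x \<in> Y - X"
      using extend[OF injP PD pinj_dom[OF q] pinj_ran[OF q] assms(1) h(1) hX] by blast
    have "hat X k = q"
    proof
      fix x
      show "hat X k x = q x"
      proof (cases "x \<in> dom q")
        case True
        hence "x \<in> X" using pinj_dom[OF q] by blast
        have "k x = the (q x)" using k(2) True by (simp add: P_def)
        moreover have "the (q x) \<in> X" using the_in_ran[OF True] pinj_ran[OF q] by blast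
        ultimately have "hat X k x = Some (the (q x))" using \<open>x \<in> X\<close> by (simp add: hat_app)
        also have "\<dots> = q x" using pinj_some[OF q True] by (rule sym)
        finally show ?thesis .
      next
        case False
        hence "q x = None" by (simp add: domIff)
        moreover have "hat X k x = None"
        proof (cases "x \<in> X")
          case True
          hence "k x \<notin> X" using k(3) False by blast
          thus ?thesis by (simp add: hat_app)
        qed (simp add: hat_app)
        ultimately show ?thesis by simp
      qed
    qed
    thus "q \<in> hat X ` Sinf Y" using k(1) by blast
  qed
qed


definition CC :: "'a set \<Rightarrow> ('a \<Rightarrow> 'a) \<Rightarrow> 'a \<Rightarrow> ('a \<rightharpoonup> 'a) set" where
  "CC X f x = (if x \<in> X then (if f x \<in> X then vset X x (f x) else w1set X x)
               else (if f x \<in> X then w2set X (f x) else pinj X))"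

definition VV :: "'a set \<Rightarrow> ('a \<Rightarrow> 'a) \<Rightarrow> 'a set \<Rightarrow> ('a \<rightharpoonup> 'a) set" where
  "VV X f S = {q \<in> pinj X. \<forall>x\<in>S. q \<in> CC X f x}"

lemma CC_SB: "CC X f x \<in> SB X"
proof (cases "x \<in> X")
  case True
  show ?thesis
  proof (cases "f x \<in> X")
    case True
    hence "vset X x (f x) \<in> SB X" using \<open>x \<in> X\<close> unfolding SB_def by blast
    thus ?thesis using True \<open>x \<in> X\<close> by (simp add: CC_def)
  next
    case False
    have "w1set X x \<in> SB X" using \<open>x \<in> X\<close> unfolding SB_def by blast
    thus ?thesis using False \<open>x \<in> X\<close> by (simp add: CC_def)
  qed
next
  case False
  show ?thesis
  proof (cases "f x \<in> X")
    case True
    hence "w2set X (f x) \<in> SB X" unfolding SB_def by blast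
    thus ?thesis using True False by (simp add: CC_def)
  next
    case F2: False
    have "pinj X \<in> SB X" unfolding SB_def by blast
    thus ?thesis using F2 False by (simp add: CC_def)
  qed
qed

lemma VV_open: assumes "finite S" shows "openin (tau_pp X) (VV X f S)"
  using assms
proof (induction S rule: finite_induct)
  case empty
  have "VV X f {} = pinj X" by (simp add: VV_def)
  moreover have "pinj X \<in> SB X" unfolding SB_def by blast
  ultimately show ?case unfolding tau_SB by (simp add: topology_generated_by_Basis)
next
  case (insert a S)
  have "VV X f (insert a S) = VV X f S \<inter> CC X f a"
    using SB_sub[OF CC_SB[of X f a]] unfolding VV_def by blast
  moreover have "openin (tau_pp X) (CC X f a)"
    unfolding tau_SB by (rule topology_generated_by_Basis[OF CC_SB])
  ultimately show ?case using insert.IH by (simp add: openin_Int)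
qed

lemma hat_VV:
  assumes "f \<in> Sinf Y" "X \<subseteq> Y" "S \<subseteq> Y"
  shows "hat X f \<in> VV X f S"
proof -
  have "hat X f \<in> CC X f x" if "x \<in> S" for x
  proof -
    have xY: "x \<in> Y" using that assms(3) by blast
    have fxY: "f x \<in> Y" by (rule Sinf_inY[OF assms(1) xY])
    show ?thesis
    proof (cases "x \<in> X")
      case True
      show ?thesis
      proof (cases "f x \<in> X")
        case True
        have "hat X f \<in> vset X x (f x)" using hat_vset[OF assms(1,2) \<open>x \<in> X\<close> True] by simp
        thus ?thesis using True \<open>x \<in> X\<close> by (simp add: CC_def)
      next
        case False
        have "hat X f \<in> w1set X x" using hat_w1set[OF assms(1,2) \<open>x \<in> X\<close>] False fxY by simp
        thus ?thesis using False \<open>x \<in> X\<close> by (simp add: CC_def)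
      qed
    next
      case False
      show ?thesis
      proof (cases "f x \<in> X")
        case True
        have "\<exists>z\<in>Y-X. f z = f x" using xY False by blast
        hence "hat X f \<in> w2set X (f x)" using hat_w2set[OF assms(1,2) True] by simp
        thus ?thesis using True False by (simp add: CC_def)
      next
        case F2: False
        have "hat X f \<in> pinj X" by (rule hat_pinj[OF assms(1,2)])
        thus ?thesis using F2 False by (simp add: CC_def)
      qed
    qed
  qed
  moreover have "hat X f \<in> pinj X" by (rule hat_pinj[OF assms(1,2)])
  ultimately show ?thesis unfolding VV_def by blast
qed

lemma VV_facts:
  assumes "q \<in> VV X f S" "x \<in> S"
  shows "q \<in> pinj X"
    and "x \<in> X \<Longrightarrow> f x \<in> X \<Longrightarrow> q x = Some (f x)"
    and "x \<in> X \<Longrightarrow> f x \<notin> X \<Longrightarrow> x \<notin> dom q"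
    and "x \<notin> X \<Longrightarrow> f x \<in> X \<Longrightarrow> f x \<notin> ran q"
proof -
  have q: "q \<in> pinj X" "q \<in> CC X f x" using assms unfolding VV_def by blast+
  show "q \<in> pinj X" by (rule q(1))
  show "x \<in> X \<Longrightarrow> f x \<in> X \<Longrightarrow> q x = Some (f x)"
    using q(2) by (simp add: CC_def vset_def)
  show "x \<in> X \<Longrightarrow> f x \<notin> X \<Longrightarrow> x \<notin> dom q"
    using q(2) by (simp add: CC_def w1set_def)
  show "x \<notin> X \<Longrightarrow> f x \<in> X \<Longrightarrow> f x \<notin> ran q"
    using q(2) by (simp add: CC_def w2set_def)
qed


lemma nbhd_finite:
  assumes f: "f \<in> Sinf Y" and XY: "X \<subseteq> Y" and fin: "finite X" "finite F" and FY: "F \<subseteq> Y"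
  shows "\<exists>V. openin (tau_pp X) V \<and> hat X f \<in> V \<and> V \<subseteq> hat X ` {k \<in> Sinf Y. \<forall>i\<in>F. k i = f i}"
proof (intro exI conjI)
  let ?S = "F \<union> X"
  show "openin (tau_pp X) (VV X f ?S)" by (rule VV_open) (use fin in simp)
  show "hat X f \<in> VV X f ?S" by (rule hat_VV[OF f XY]) (use FY XY in blast)
  show "VV X f ?S \<subseteq> hat X ` {k \<in> Sinf Y. \<forall>i\<in>F. k i = f i}"
  proof
    fix q assume q: "q \<in> VV X f ?S"
    have qp: "q \<in> pinj X" using q unfolding VV_def by blast
    have "q = hat X f"
    proof
      fix x
      show "q x = hat X f x"
      proof (cases "x \<in> X")
        case True
        hence xS: "x \<in> ?S" by blast
        show ?thesis
        proof (cases "f x \<in> X")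
          case True
          thus ?thesis using VV_facts(2)[OF q xS \<open>x \<in> X\<close> True] \<open>x \<in> X\<close> by (simp add: hat_app)
        next
          case False
          have "x \<notin> dom q" by (rule VV_facts(3)[OF q xS \<open>x \<in> X\<close> False])
          thus ?thesis using False by (simp add: hat_app domIff)
        qed
      next
        case False
        have "x \<notin> dom q" using False pinj_dom[OF qp] by blast
        thus ?thesis using False by (simp add: hat_app domIff)
      qed
    qed
    moreover have "f \<in> {k \<in> Sinf Y. \<forall>i\<in>F. k i = f i}" using f by simp
    ultimately show "q \<in> hat X ` {k \<in> Sinf Y. \<forall>i\<in>F. k i = f i}" by blast
  qed
qed

lemma nbhd_infinite:
  assumes f: "f \<in> Sinf Y" and XY: "X \<subseteq> Y" and lep: "X \<lesssim> Y - X"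
    and inf: "infinite X" and fin: "finite F" and FY: "F \<subseteq> Y"
  shows "\<exists>V. openin (tau_pp X) V \<and> hat X f \<in> V \<and> V \<subseteq> hat X ` {k \<in> Sinf Y. \<forall>i\<in>F. k i = f i}"
proof (intro exI conjI)
  show "openin (tau_pp X) (VV X f F)" by (rule VV_open[OF fin])
  show "hat X f \<in> VV X f F" by (rule hat_VV[OF f XY FY])
  show "VV X f F \<subseteq> hat X ` {k \<in> Sinf Y. \<forall>i\<in>F. k i = f i}"
  proof
    fix q assume q: "q \<in> VV X f F"
    have qp: "q \<in> pinj X" using q unfolding VV_def by blast
    have cons: "the (q x) = f x" if "x \<in> F" "x \<in> dom q" for x
    proof -
      have xX: "x \<in> X" using that(2) pinj_dom[OF qp] by blast
      have "f x \<in> X"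
      proof (rule ccontr)
        assume "f x \<notin> X"
        hence "x \<notin> dom q" by (rule VV_facts(3)[OF q that(1) xX])
        thus False using that(2) by contradiction
      qed
      hence "q x = Some (f x)" by (rule VV_facts(2)[OF q that(1) xX])
      thus ?thesis by simp
    qed
    define D where "D = dom q \<union> F"
    define P where "P = (\<lambda>x. if x \<in> dom q then the (q x) else f x)"
    define R where "R = P ` D"
    define G where "G = F \<union> f ` F"
    define M where "M = X \<union> G"
    have finG: "finite G" unfolding G_def using fin by simp
    have GY: "G \<subseteq> Y" unfolding G_def using FY Sinf_inY[OF f] by blast
    have MY: "M \<subseteq> Y" unfolding M_def using XY GY by blast
    have DM: "D \<subseteq> M" unfolding D_def M_def G_def using pinj_dom[OF qp] by blast
    have RM: "R \<subseteq> M"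
    proof
      fix y assume "y \<in> R"
      then obtain x where x: "x \<in> D" "y = P x" unfolding R_def by blast
      show "y \<in> M"
      proof (cases "x \<in> dom q")
        case True
        hence "y = the (q x)" using x(2) by (simp add: P_def)
        hence "y \<in> X" using the_in_ran[OF True] pinj_ran[OF qp] by blast
        thus ?thesis unfolding M_def by blast
      next
        case False
        hence "x \<in> F" "y = f x" using x by (simp_all add: D_def P_def)
        thus ?thesis unfolding M_def G_def by blast
      qed
    qed
    have injP: "inj_on P D"
    proof (rule inj_onI)
      fix x z assume xz: "x \<in> D" "z \<in> D" "P x = P z"
      have key: "x = z" if a: "x \<in> dom q" "z \<notin> dom q" "z \<in> D" "P x = P z" for x z
      proof -
        have zF: "z \<in> F" using a(2,3) by (simp add: D_def)
        have pz: "P z = f z" using a(2) by (simp add: P_def)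
        have px: "P x = the (q x)" using a(1) by (simp add: P_def)
        have inran: "f z \<in> ran q" using the_in_ran[OF a(1)] a(4) px pz by simp
        hence fzX: "f z \<in> X" using pinj_ran[OF qp] by blast
        show "x = z"
        proof (cases "z \<in> X")
          case True
          have "q z = Some (f z)" by (rule VV_facts(2)[OF q zF True fzX])
          hence "z \<in> dom q" by (simp add: domI)
          thus ?thesis using a(2) by contradiction
        next
          case False
          have "f z \<notin> ran q" by (rule VV_facts(4)[OF q zF False fzX])
          thus ?thesis using inran by contradiction
        qed
      qed
      show "x = z"
      proof (cases "x \<in> dom q")
        case xq: True
        show ?thesis
        proof (cases "z \<in> dom q")
          case True
          have e1: "q x = Some (P x)" using pinj_some[OF qp xq] xq by (simp add: P_def)
          have e2: "q z = Some (P z)" using pinj_some[OF qp True] True by (simp add: P_def)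
          have "q x = q z" using e1 e2 xz(3) by simp
          thus ?thesis using pinj_inj[OF qp] xq True by (simp add: inj_on_def)
        next
          case False
          show ?thesis by (rule key[OF xq False xz(2,3)])
        qed
      next
        case xq: False
        show ?thesis
        proof (cases "z \<in> dom q")
          case True
          have "z = x" by (rule key[OF True xq xz(1) xz(3)[symmetric]])
          thus ?thesis by simp
        next
          case False
          have "x \<in> F" "z \<in> F" using xz(1,2) xq False by (simp_all add: D_def)
          moreover have "f x = f z" using xz(3) xq False by (simp add: P_def)
          ultimately show ?thesis using Sinf_inj[OF f] FY by blast
        qed
      qed
    qed
    have infYX: "infinite (Y - X)" using lep inf lepoll_finite' by blast
    have "M \<approx> X" unfolding M_def by (rule Un_fin_eqpoll[OF inf finG])
    also have "X \<lesssim> Y - X" by (rule lep)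
    also have "Y - X \<approx> (Y - X) - G" by (rule eqpoll_sym[OF Diff_fin_eqpoll[OF infYX finG]])
    also have "(Y - X) - G = Y - M" unfolding M_def by blast
    finally have "M \<lesssim> Y - M" .
    then obtain h where h: "inj_on h M" "h \<in> M \<rightarrow> Y - M" unfolding lepoll_def' by blast
    have hM: "h ` M \<subseteq> Y - M" using h(2) by blast
    obtain k where k: "k \<in> Sinf Y" "\<forall>x\<in>D. k x = P x" "\<forall>x\<in>M-D. k x \<in> Y - M"
      using extend[OF injP R_def[symmetric] DM RM MY h(1) hM] by blast
    have kF: "\<forall>i\<in>F. k i = f i"
    proof
      fix i assume i: "i \<in> F"
      hence "k i = P i" using k(2) by (simp add: D_def)
      also have "\<dots> = f i"
        using cons[OF i] by (simp add: P_def)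
      finally show "k i = f i" .
    qed
    have "hat X k = q"
    proof
      fix x
      show "hat X k x = q x"
      proof (cases "x \<in> dom q")
        case True
        hence xX: "x \<in> X" using pinj_dom[OF qp] by blast
        have "k x = the (q x)" using k(2) True by (simp add: D_def P_def)
        moreover have "the (q x) \<in> X" using the_in_ran[OF True] pinj_ran[OF qp] by blast
        ultimately have "hat X k x = Some (the (q x))" using xX by (simp add: hat_app)
        also have "\<dots> = q x" using pinj_some[OF qp True] by (rule sym)
        finally show ?thesis .
      next
        case False
        hence qn: "q x = None" by (simp add: domIff)
        have "hat X k x = None"
        proof (cases "x \<in> X")
          case xX: True
          show ?thesis
          proof (cases "x \<in> F")
            case True
            have "k x = f x" using kF True by blast
            moreover have "f x \<notin> X"
            proof
              assume "f x \<in> X"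
              hence "q x = Some (f x)" by (rule VV_facts(2)[OF q True xX])
              thus False using qn by simp
            qed
            ultimately show ?thesis by (simp add: hat_app)
          next
            case F2: False
            have "x \<in> M - D" using xX F2 False unfolding M_def D_def by blast
            hence "k x \<notin> X" using k(3) unfolding M_def by blast
            thus ?thesis by (simp add: hat_app)
          qed
        qed (simp add: hat_app)
        thus ?thesis using qn by simp
      qed
    qed
    thus "q \<in> hat X ` {k \<in> Sinf Y. \<forall>i\<in>F. k i = f i}" using k(1) kF by blast
  qed
qed


lemma nbhd:
  assumes "f \<in> Sinf Y" "X \<subseteq> Y" "X \<lesssim> Y - X" "finite F" "F \<subseteq> Y"
  shows "\<exists>V. openin (tau_pp X) V \<and> hat X f \<in> V \<and> V \<subseteq> hat X ` {k \<in> Sinf Y. \<forall>i\<in>F. k i = f i}"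
proof (cases "finite X")
  case True
  show ?thesis by (rule nbhd_finite[OF assms(1,2) True assms(4,5)])
next
  case False
  show ?thesis by (rule nbhd_infinite[OF assms(1,2,3) False assms(4,5)])
qed

lemma openness:
  assumes XY: "X \<subseteq> Y" and lep: "X \<lesssim> Y - X"
  shows "open_map (Sinf_top Y) (tau_pp X) (hat X)"
  unfolding open_map_def
proof (intro allI impI)
  fix U assume U: "openin (Sinf_top Y) U"
  show "openin (tau_pp X) (hat X ` U)"
  proof (subst openin_subopen, intro ballI)
    fix q assume "q \<in> hat X ` U"
    then obtain f where fU: "f \<in> U" and qf: "q = hat X f" by blast
    obtain T0 where T0: "openin (product_topology (\<lambda>_. discrete_topology Y) Y) T0" "U = T0 \<inter> Sinf Y"
      using U unfolding Sinf_top_def openin_subtopology by blast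
    have fT: "f \<in> T0" "f \<in> Sinf Y" using fU T0(2) by blast+
    obtain Xs where Xs: "f \<in> (\<Pi>\<^sub>E i\<in>Y. Xs i)" "\<forall>i. openin (discrete_topology Y) (Xs i)"
        "finite {i. Xs i \<noteq> topspace (discrete_topology Y)}" "(\<Pi>\<^sub>E i\<in>Y. Xs i) \<subseteq> T0"
      using product_topology_open_contains_basis[OF T0(1) fT(1)] by blast
    define F where "F = {i \<in> Y. Xs i \<noteq> Y}"
    have finF: "finite F"
      by (rule finite_subset[OF _ Xs(3)]) (auto simp: F_def)
    have FY: "F \<subseteq> Y" unfolding F_def by blast
    have NU: "{k \<in> Sinf Y. \<forall>i\<in>F. k i = f i} \<subseteq> U"
    proof
      fix k assume k: "k \<in> {k \<in> Sinf Y. \<forall>i\<in>F. k i = f i}"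
      hence kS: "k \<in> Sinf Y" and kF: "\<forall>i\<in>F. k i = f i" by auto
      have "k \<in> (\<Pi>\<^sub>E i\<in>Y. Xs i)"
        unfolding PiE_iff
      proof (intro conjI ballI)
        fix i assume iY: "i \<in> Y"
        show "k i \<in> Xs i"
        proof (cases "Xs i = Y")
          case True
          thus ?thesis using Sinf_inY[OF kS iY] by simp
        next
          case False
          hence "i \<in> F" using iY by (simp add: F_def)
          hence "k i = f i" using kF by blast
          moreover have "f i \<in> Xs i" using Xs(1) iY by (simp add: PiE_iff)
          ultimately show ?thesis by simp
        qed
      next
        show "k \<in> extensional Y" using kS by (simp add: Sinf_def)
      qed
      hence "k \<in> T0" using Xs(4) by blast
      thus "k \<in> U" using kS T0(2) by blast
    qed
    obtain V where V: "openin (tau_pp X) V" "hat X f \<in> V" "V \<subseteq> hat X ` {k \<in> Sinf Y. \<forall>i\<in>F. k i = f i}"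
      using nbhd[OF fT(2) XY lep finF FY] by blast
    have "V \<subseteq> hat X ` U" using V(3) NU by blast
    thus "\<exists>T. openin (tau_pp X) T \<and> q \<in> T \<and> T \<subseteq> hat X ` U" using V(1,2) qf by blast
  qed
qed

theorem proposition6p2:
  fixes X Y :: "'a set"
  assumes "X \<subseteq> Y"
    and "X \<lesssim> Y - X"
  shows "continuous_map (Sinf_top Y) (tau_pp X) (hat X)
       \<and> hat X ` Sinf Y = pinj X
       \<and> open_map (Sinf_top Y) (tau_pp X) (hat X)"
  using continuity[OF assms(1)] surjectivity[OF assms] openness[OF assms] by blast

end
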